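(* Let $K \subset \mathbb R^3$ be a regular convex cone whose boundary is of class $C^k$, $k \geq 5$, and positively curved, and let $\gamma \subset \mathbb{RP}^2$ be the projective image of $\partial K$. Let $\alpha,\beta$ be $2\pi$-periodic real functions of class $C^{k-4}$, $C^{k-5}$ respectively, and let $y:\mathbb R \to \mathbb R^3$ be a $2\pi$-periodic solution of \[ y''' + 2\alpha y' + \alpha' y + \beta y = 0 \] such that $\det(y'',y',y) \equiv 1$, the projective image of $y$ is $\gamma$, and $y(t)$ makes exactly one turn around $K$ along $\partial K$ as $t$ runs over one period. Set $Y = (y''+\alpha y, y', y)$ (a $3\times 3$ matrix with these columns). Let $K^*$ be the dual cone of $K$ and $\gamma^*$ the projective image of $\partial K^*$ (the dual projective curve of $\gamma$). Then there exists a vector-valued solution $z:\mathbb R\to\mathbb R^3$ of the adjoint equation \[ z''' + 2\alpha z' + \alpha' z - \beta z = 0 \] which is a lift of $\gamma^*$ and satisfies $\det(z'',z',z) \equiv 1$, and the matrix $Z = (z''+\alpha z, z', z) \in SL(3,\mathbb R)$ is given by $Z = Y^{-T}Q$, where \[ Q = \begin{pmatrix} 0 & 0 & 1 \\ 0 & -1 & 0 \\ 1 & 0 & 0 \end{pmatrix}. \]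
   Context: A regular convex cone is a closed convex cone with non-empty interior containing no lines. The dual cone $K^*$ is the set of linear functionals nonnegative on $K$, identified with vectors in $\mathbb R^3$ via the standard inner product. "Positively curved boundary" means the boundary $\partial K\setminus\{0\}$ has everywhere positive curvature (in the directions transverse to the rays), so that its projective image $\gamma$ is a simple closed strictly convex curve without inflection points. A lift of a curve in $\mathbb{RP}^2$ is a curve in $\mathbb R^3\setminus\{0\}$ whose projective image is the given curve (pointwise in the parameter; here $z(t)$ projects to the point of $\gamma^*$ corresponding to the tangent line of $\gamma$ at the projective image of $y(t)$). *)

theory Defs
  imports "HOL-Analysis.Analysis"
begin

definition vderiv :: "(real \<Rightarrow> 'a::real_normed_vector) \<Rightarrow> real \<Rightarrow> 'a" where
  "vderiv f = (\<lambda>t. vector_derivative f (at t))"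

definition Ck_fun :: "nat \<Rightarrow> (real \<Rightarrow> 'a::real_normed_vector) \<Rightarrow> bool" where
  "Ck_fun n f \<longleftrightarrow> (\<forall>j<n. \<forall>t. (vderiv ^^ j) f differentiable at t)
                    \<and> continuous_on UNIV ((vderiv ^^ n) f)"

definition cols3 :: "real^3 \<Rightarrow> real^3 \<Rightarrow> real^3 \<Rightarrow> real^3^3" where
  "cols3 a b c = transpose (vector [a, b, c])"

(* point of RP^2 represented by x (a 1-dimensional subspace when x \<noteq> 0) *)
definition proj :: "real^3 \<Rightarrow> (real^3) set" where
  "proj x = span {x}"

definition regular_convex_cone :: "(real^3) set \<Rightarrow> bool" where
  "regular_convex_cone K \<longleftrightarrow> closed K \<and> convex K \<and> cone K \<and> interior K \<noteq> {}
     \<and> \<not> (\<exists>a v. v \<noteq> 0 \<and> (\<forall>s::real. a + s *\<^sub>R v \<in> K))"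

definition dual_cone :: "(real^3) set \<Rightarrow> (real^3) set" where
  "dual_cone K = {w. \<forall>x\<in>K. 0 \<le> w \<bullet> x}"

definition proj_image :: "(real^3) set \<Rightarrow> (real^3) set set" where
  "proj_image K = proj ` (frontier K - {0})"

(* \<partial>K \<setminus> {0} is a C^k surface with positive curvature transverse to the rays:
   near each of its points it is the union of the open rays through a regular
   C^k curve c without inflection points, i.e. det(c, c', c'') \<noteq> 0. *)
definition posc_Ck_boundary :: "nat \<Rightarrow> (real^3) set \<Rightarrow> bool" where
  "posc_Ck_boundary k K \<longleftrightarrow>
     (\<forall>p \<in> frontier K - {0}. \<exists>c U \<epsilon>. 0 < \<epsilon> \<and> open U \<and> p \<in> U \<and> Ck_fun k c \<and> c 0 = p
        \<and> (\<forall>u. det (cols3 (c u) (vderiv c u) (vderiv (vderiv c) u)) \<noteq> 0)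
        \<and> frontier K \<inter> U = U \<inter> {r *\<^sub>R c u | r u. 0 < r \<and> u \<in> {-\<epsilon><..<\<epsilon>}})"

(* the point of \<gamma>* corresponding to the tangent (= supporting) line of \<gamma> at the
   projective point of p \<in> \<partial>K \<setminus> {0}: the ray of K* annihilating the tangent plane *)
definition dual_point :: "(real^3) set \<Rightarrow> real^3 \<Rightarrow> (real^3) set set" where
  "dual_point K p = {proj w | w. w \<in> dual_cone K \<and> w \<noteq> 0 \<and> w \<bullet> p = 0}"

definition Qmat :: "real^3^3" where
  "Qmat = vector [vector [0, 0, 1], vector [0, -1, 0], vector [1, 0, 0]]"

end

theory Submission
  imports Defs
begin

lemma cols3_nth: "cols3 a b c $ i $ j = (if j = 1 then a $ i else if j = 2 then b $ i else c $ i)"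
  unfolding cols3_def transpose_def using exhaust_3[of j] by (auto simp: vector_3)
lemma det_cols3: "det (cols3 a b c) = a$1 * b$2 * c$3 - a$1 * b$3 * c$2 - a$2 * b$1 * c$3 + a$2*b$3*c$1 + a$3*b$1*c$2 - a$3*b$2*c$1"
  by (simp add: det_3 cols3_nth algebra_simps)
lemma Q_nth: "Qmat $ i $ j = (if i = 1 \<and> j = 3 \<or> i = 3 \<and> j = 1 then 1 else if i = 2 \<and> j = 2 then -1 else 0)"
  unfolding Qmat_def using exhaust_3[of j] exhaust_3[of i] by (auto simp: vector_3)

lemma alg1:
  fixes a b c :: "real^3" and l :: real
  shows "cols3 (a + l *\<^sub>R c) b c ** transpose (cols3 (cross3 a b - (2*l) *\<^sub>R cross3 b c + l *\<^sub>R cross3 b c) (cross3 a c) (cross3 b c) ** Qmat)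
     = det (cols3 a b c) *\<^sub>R mat 1"
  unfolding vec_eq_iff forall_3
  by (simp add: matrix_matrix_mult_def sum_3 cols3_nth Q_nth transpose_def cross3_def mat_def det_cols3 algebra_simps)

lemma alg2:
  fixes a b c :: "real^3" and l :: real
  shows "transpose (cols3 (cross3 a b - (2*l) *\<^sub>R cross3 b c + l *\<^sub>R cross3 b c) (cross3 a c) (cross3 b c) ** Qmat) ** cols3 (a + l *\<^sub>R c) b c
     = det (cols3 a b c) *\<^sub>R mat 1"
  unfolding vec_eq_iff forall_3
  by (simp add: matrix_matrix_mult_def sum_3 cols3_nth Q_nth transpose_def cross3_def mat_def det_cols3 algebra_simps)

lemma alg3:
  fixes a b c :: "real^3" and l :: real
  shows "det (cols3 (cross3 a b - (2*l) *\<^sub>R cross3 b c) (cross3 a c) (cross3 b c)) = (det (cols3 a b c))^2"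
    "det (cols3 (cross3 a b - (2*l) *\<^sub>R cross3 b c + l *\<^sub>R cross3 b c) (cross3 a c) (cross3 b c)) = (det (cols3 a b c))^2"
  by (simp_all add: det_cols3 cross3_def power2_eq_square algebra_simps)

lemma QQ: "Qmat ** Qmat = mat 1"
  unfolding vec_eq_iff forall_3
  by (simp add: matrix_matrix_mult_def sum_3 Q_nth mat_def)

lemma matrix_inv_eq:
  fixes A B :: "real^3^3"
  assumes "A ** B = mat 1" "B ** A = mat 1"
  shows "matrix_inv A = B"
proof -
  have ex: "\<exists>A'. A ** A' = mat 1 \<and> A' ** A = mat 1" using assms by blast
  define A' where "A' = matrix_inv A"
  have h: "A ** A' = mat 1 \<and> A' ** A = mat 1"
    unfolding A'_def matrix_inv_def by (rule someI_ex[OF ex])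
  have "A' = A' ** (A ** B)" using assms by (simp add: matrix_mul_rid)
  also have "\<dots> = (A' ** A) ** B" by (simp add: matrix_mul_assoc)
  also have "\<dots> = B" using h by (simp add: matrix_mul_lid)
  finally show ?thesis unfolding A'_def .
qed

lemma cross_cross_left: "cross3 (cross3 u v) a = (u \<bullet> a) *\<^sub>R v - (v \<bullet> a) *\<^sub>R u"
  unfolding vec_eq_iff forall_3 by (simp add: cross3_def inner_vec_def sum_3 algebra_simps)
lemma cross_cross_self: "cross3 x (cross3 x a) = (x \<bullet> a) *\<^sub>R x - (x \<bullet> x) *\<^sub>R a"
  unfolding vec_eq_iff forall_3 by (simp add: cross3_def inner_vec_def sum_3 algebra_simps)

lemma det_zero_col3: "det (cols3 a b 0) = 0"
  by (simp add: det_cols3)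

lemma span_scale:
  fixes x :: "real^3"
  shows "(c::real) \<noteq> 0 \<Longrightarrow> span {c *\<^sub>R x} = span {x}"
proof
  assume c: "c \<noteq> 0"
  show "span {c *\<^sub>R x} \<subseteq> span {x}"
    by (simp add: span_minimal span_base span_mul subspace_span)
  have "x = inverse c *\<^sub>R (c *\<^sub>R x)" using c by simp
  then have "x \<in> span {c *\<^sub>R x}" by (metis span_base span_mul insertI1)
  then show "span {x} \<subseteq> span {c *\<^sub>R x}"
    by (simp add: span_minimal subspace_span)
qed

lemma bb_cross: "bounded_bilinear cross3"
  using bilinear_cross bilinear_conv_bounded_bilinear by blast

theorem lemma2:
  fixes K :: "(real^3) set" and k :: nat
    and \<alpha> \<beta> :: "real \<Rightarrow> real" and y :: "real \<Rightarrow> real^3"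
  assumes cone: "regular_convex_cone K"
    and k: "5 \<le> k"
    and bdry: "posc_Ck_boundary k K"
    and \<alpha>: "Ck_fun (k - 4) \<alpha>" "\<forall>t. \<alpha> (t + 2 * pi) = \<alpha> t"
    and \<beta>: "Ck_fun (k - 5) \<beta>" "\<forall>t. \<beta> (t + 2 * pi) = \<beta> t"
    and ydiff: "\<forall>j<3. \<forall>t. (vderiv ^^ j) y differentiable at t"
    and yper: "\<forall>t. y (t + 2 * pi) = y t"
    and yode: "\<forall>t. vderiv (vderiv (vderiv y)) t + (2 * \<alpha> t) *\<^sub>R vderiv y t
                   + vderiv \<alpha> t *\<^sub>R y t + \<beta> t *\<^sub>R y t = 0"
    and ydet: "\<forall>t. det (cols3 (vderiv (vderiv y) t) (vderiv y t) (y t)) = 1"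
    and yimg: "proj ` range y = proj_image K"
    and yturn: "\<forall>t. y t \<in> frontier K" "inj_on (\<lambda>t. proj (y t)) {0..<2 * pi}"
  shows "\<exists>z :: real \<Rightarrow> real^3.
           (\<forall>j<3. \<forall>t. (vderiv ^^ j) z differentiable at t)
         \<and> (\<forall>t. vderiv (vderiv (vderiv z)) t + (2 * \<alpha> t) *\<^sub>R vderiv z t
                 + vderiv \<alpha> t *\<^sub>R z t - \<beta> t *\<^sub>R z t = 0)
         \<and> (\<forall>t. z t \<noteq> 0 \<and> proj (z t) \<in> proj_image (dual_cone K)
                 \<and> proj (z t) \<in> dual_point K (y t))
         \<and> (\<forall>t. det (cols3 (vderiv (vderiv z) t) (vderiv z t) (z t)) = 1)
         \<and> (\<forall>t. let Y = cols3 (vderiv (vderiv y) t + \<alpha> t *\<^sub>R y t) (vderiv y t) (y t);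
                    Z = cols3 (vderiv (vderiv z) t + \<alpha> t *\<^sub>R z t) (vderiv z t) (z t)
                in det Z = 1 \<and> Z = transpose (matrix_inv Y) ** Qmat)"
proof -
  define y1 where "y1 = vderiv y"
  define y2 where "y2 = vderiv y1"
  define y3 where "y3 = vderiv y2"
  define a1 where "a1 = vderiv \<alpha>"
  have yd0: "y differentiable at t" for t using ydiff by (metis funpow_0 zero_less_numeral)
  have yd1: "y1 differentiable at t" for t using ydiff[rule_format, of 1 t] by (simp add: y1_def)
  have yd2: "y2 differentiable at t" for t using ydiff[rule_format, of 2 t]
    by (simp add: y1_def y2_def numeral_2_eq_2)
  have Dy: "(y has_vector_derivative y1 t) (at t)" for t
    unfolding y1_def vderiv_def using yd0 vector_derivative_works by blast
  have Dy1: "(y1 has_vector_derivative y2 t) (at t)" for t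
    unfolding y2_def vderiv_def using yd1 vector_derivative_works by blast
  have Dy2: "(y2 has_vector_derivative y3 t) (at t)" for t
    unfolding y3_def vderiv_def using yd2 vector_derivative_works by blast
  have ad: "\<alpha> differentiable at t" for t
  proof -
    have "0 < k - 4" using k by simp
    then show ?thesis using \<alpha>(1) unfolding Ck_fun_def by (metis funpow_0)
  qed
  have Da: "(\<alpha> has_field_derivative a1 t) (at t)" for t
    unfolding a1_def vderiv_def has_real_derivative_iff_has_vector_derivative
    using ad vector_derivative_works by blast
  have y3eq: "y3 t = - ((2 * \<alpha> t) *\<^sub>R y1 t + a1 t *\<^sub>R y t + \<beta> t *\<^sub>R y t)" for t
    using yode[rule_format, of t] unfolding y1_def y2_def y3_def a1_def eq_neg_iff_add_eq_0
    by (metis add.assoc)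
  define z where "z t = cross3 (y1 t) (y t)" for t
  define z1 where "z1 t = cross3 (y2 t) (y t)" for t
  define z2 where "z2 t = cross3 (y2 t) (y1 t) - (2 * \<alpha> t) *\<^sub>R z t" for t
  define z3 where "z3 t = cross3 (y3 t) (y1 t) - 2 *\<^sub>R (\<alpha> t *\<^sub>R z1 t + a1 t *\<^sub>R z t)" for t
  have Dz: "(z has_vector_derivative z1 t) (at t)" for t
    using bounded_bilinear.has_vector_derivative[OF bb_cross Dy1[of t] Dy[of t]]
    unfolding z_def[abs_def] z1_def by simp
  have Dz1: "(z1 has_vector_derivative z2 t) (at t)" for t
  proof -
    have "(z1 has_vector_derivative (cross3 (y2 t) (y1 t) + cross3 (y3 t) (y t))) (at t)"
      using bounded_bilinear.has_vector_derivative[OF bb_cross Dy2[of t] Dy[of t]]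
      unfolding z1_def[abs_def] by simp
    moreover have "cross3 (y2 t) (y1 t) + cross3 (y3 t) (y t) = z2 t"
      unfolding z2_def z_def y3eq vec_eq_iff forall_3
      by (simp add: cross3_def algebra_simps)
    ultimately show ?thesis by simp
  qed
  have Dz2: "(z2 has_vector_derivative z3 t) (at t)" for t
  proof -
    have d1: "((\<lambda>x. cross3 (y2 x) (y1 x)) has_vector_derivative cross3 (y3 t) (y1 t)) (at t)"
      using bounded_bilinear.has_vector_derivative[OF bb_cross Dy2[of t] Dy1[of t]] by simp
    have d2: "((\<lambda>x. \<alpha> x *\<^sub>R z x) has_vector_derivative (\<alpha> t *\<^sub>R z1 t + a1 t *\<^sub>R z t)) (at t)"
      using has_vector_derivative_scaleR[OF Da[of t] Dz[of t]] .
    have "((\<lambda>x. cross3 (y2 x) (y1 x) - 2 *\<^sub>R (\<alpha> x *\<^sub>R z x)) has_vector_derivative z3 t) (at t)"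
    proof -
      have d3: "((\<lambda>x. 2 *\<^sub>R (\<alpha> x *\<^sub>R z x)) has_vector_derivative 2 *\<^sub>R (\<alpha> t *\<^sub>R z1 t + a1 t *\<^sub>R z t)) (at t)"
        using has_vector_derivative_scaleR[OF DERIV_const[of 2] d2] by simp
      show ?thesis unfolding z3_def by (rule has_vector_derivative_diff[OF d1 d3])
    qed
    moreover have "(\<lambda>x. cross3 (y2 x) (y1 x) - 2 *\<^sub>R (\<alpha> x *\<^sub>R z x)) = z2"
      unfolding z2_def by (auto simp: fun_eq_iff)
    ultimately show ?thesis by simp
  qed
  have vz: "vderiv z = z1" using Dz vector_derivative_at unfolding vderiv_def by (auto simp: fun_eq_iff)
  have vz1: "vderiv z1 = z2" using Dz1 vector_derivative_at unfolding vderiv_def by (auto simp: fun_eq_iff)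
  have vz2: "vderiv z2 = z3" using Dz2 vector_derivative_at unfolding vderiv_def by (auto simp: fun_eq_iff)
  have zdiff: "\<forall>j<3. \<forall>t. (vderiv ^^ j) z differentiable at t"
  proof (intro allI impI)
    fix j t assume "j < (3::nat)"
    then have "j = 0 \<or> j = 1 \<or> j = 2" by auto
    then show "(vderiv ^^ j) z differentiable at t"
      using differentiableI_vector[OF Dz] differentiableI_vector[OF Dz1] differentiableI_vector[OF Dz2]
      by (auto simp: vz vz1 numeral_2_eq_2)
  qed
  have zode: "\<forall>t. vderiv (vderiv (vderiv z)) t + (2 * \<alpha> t) *\<^sub>R vderiv z t
                 + vderiv \<alpha> t *\<^sub>R z t - \<beta> t *\<^sub>R z t = 0"
  proof
    fix t
    have cr: "cross3 (y3 t) (y1 t) = (a1 t + \<beta> t) *\<^sub>R z t"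
      unfolding y3eq z_def vec_eq_iff forall_3
      by (simp add: cross3_def algebra_simps)
    show "vderiv (vderiv (vderiv z)) t + (2 * \<alpha> t) *\<^sub>R vderiv z t
                 + vderiv \<alpha> t *\<^sub>R z t - \<beta> t *\<^sub>R z t = 0"
      unfolding vz vz1 vz2 z3_def a1_def[symmetric] cr vec_eq_iff forall_3
      by (simp add: algebra_simps)
  qed
  have yne: "y t \<noteq> 0" for t
    using ydet[rule_format, of t] by (auto simp: det_cols3)
  have K: "closed K" "convex K" "cone K" "interior K \<noteq> {}"
    using cone unfolding regular_convex_cone_def by auto
  have geo: "z t \<noteq> 0 \<and> proj (z t) \<in> proj_image (dual_cone K) \<and> proj (z t) \<in> dual_point K (y t)" for t
  proof -
    have yK: "y s \<in> K" for s using yturn(1) K(1) frontier_subset_closed by blast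
    have "y t \<in> closure K" using yK closure_subset by blast
    moreover have "y t \<notin> rel_interior K"
      using yturn(1) K(4) rel_interior_nonempty_interior by (auto simp: frontier_def)
    ultimately obtain w where w0: "w \<noteq> 0" and wle: "\<And>v. v \<in> closure K \<Longrightarrow> w \<bullet> y t \<le> w \<bullet> v"
      using supporting_hyperplane_relative_frontier[OF K(2)] by blast
    have wle': "w \<bullet> y t \<le> w \<bullet> v" if "v \<in> K" for v using wle that closure_subset by blast
    have "0 \<in> K" using K(3) yK cone_contains_0 by blast
    then have "w \<bullet> y t \<le> 0" using wle'[of 0] by simp
    moreover have "2 *\<^sub>R y t \<in> K" using K(3) yK unfolding cone_def by simp
    then have "w \<bullet> y t \<le> 2 * (w \<bullet> y t)" using wle'[of "2 *\<^sub>R y t"] by simp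
    ultimately have wy: "w \<bullet> y t = 0" by linarith
    have wdual: "w \<in> dual_cone K" unfolding dual_cone_def using wle' wy by simp
    have "((\<lambda>s. w \<bullet> y s) has_real_derivative (w \<bullet> y1 t)) (at t)"
      unfolding has_real_derivative_iff_has_vector_derivative
      using bounded_linear.has_vector_derivative[OF bounded_linear_inner_right Dy[of t]] by simp
    moreover have "\<forall>s. \<bar>t - s\<bar> < 1 \<longrightarrow> w \<bullet> y t \<le> w \<bullet> y s" using wle' yK by blast
    ultimately have wy1: "w \<bullet> y1 t = 0" using DERIV_local_min by (metis zero_less_one)
    have "cross3 (z t) w = 0" unfolding z_def cross_cross_left using wy wy1 by (simp add: inner_commute)
    then have "cross3 (z t) (cross3 (z t) w) = 0" by simp
    then have eq: "(z t \<bullet> z t) *\<^sub>R w = (z t \<bullet> w) *\<^sub>R z t" unfolding cross_cross_self by simp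
    have zne: "z t \<noteq> 0" using alg3(1)[where a="y2 t" and b="y1 t" and c="y t" and l="\<alpha> t"] ydet[rule_format, of t]
      unfolding z_def y1_def y2_def by (auto simp: det_cols3)
    define c where "c = (z t \<bullet> w) / (z t \<bullet> z t)"
    have zz: "z t \<bullet> z t \<noteq> 0" using zne by simp
    have wc: "w = c *\<^sub>R z t"
    proof -
      have "c *\<^sub>R z t = inverse (z t \<bullet> z t) *\<^sub>R ((z t \<bullet> w) *\<^sub>R z t)"
        unfolding c_def by (simp add: divide_inverse mult.commute)
      also have "\<dots> = w" unfolding eq[symmetric] using zz by simp
      finally show ?thesis by simp
    qed
    have c0: "c \<noteq> 0" using w0 wc by auto
    have pw: "proj w = proj (z t)" unfolding proj_def wc using span_scale[OF c0] .
    have "w \<notin> interior (dual_cone K)"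
    proof
      assume "w \<in> interior (dual_cone K)"
      then obtain e where e: "e > 0" "ball w e \<subseteq> dual_cone K" by (metis mem_interior)
      define d where "d = e / (2 * norm (y t))"
      have d: "d > 0" using e yne by (simp add: d_def)
      have "dist w (w - d *\<^sub>R y t) = e / 2" using yne d e(1)
        by (simp add: dist_norm d_def)
      then have "w - d *\<^sub>R y t \<in> dual_cone K" using e by auto
      then have "0 \<le> (w - d *\<^sub>R y t) \<bullet> y t" using yK unfolding dual_cone_def by blast
      also have "\<dots> = - d * (y t \<bullet> y t)" using wy by (simp add: inner_diff_left)
      finally have "y t \<bullet> y t \<le> 0" using d by (simp add: mult_le_0_iff)
      then show False using yne[of t] inner_gt_zero_iff[of "y t"] by linarith
    qed
    then have "w \<in> frontier (dual_cone K) - {0}" using wdual w0 closure_subset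
      by (auto simp: frontier_def)
    then have "proj (z t) \<in> proj_image (dual_cone K)" unfolding proj_image_def pw[symmetric] by blast
    moreover have "proj (z t) \<in> dual_point K (y t)" unfolding dual_point_def
      using wdual w0 wy pw by (auto simp: inner_commute)
    ultimately show ?thesis using zne by blast
  qed
  have mat: "let Y = cols3 (vderiv (vderiv y) t + \<alpha> t *\<^sub>R y t) (vderiv y t) (y t);
                    Z = cols3 (vderiv (vderiv z) t + \<alpha> t *\<^sub>R z t) (vderiv z t) (z t)
                in det Z = 1 \<and> Z = transpose (matrix_inv Y) ** Qmat" for t
  proof -
    have d1: "det (cols3 (y2 t) (y1 t) (y t)) = 1" using ydet unfolding y1_def y2_def by simp
    let ?Y = "cols3 (y2 t + \<alpha> t *\<^sub>R y t) (y1 t) (y t)"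
    let ?Z = "cols3 (cross3 (y2 t) (y1 t) - (2 * \<alpha> t) *\<^sub>R cross3 (y1 t) (y t) + \<alpha> t *\<^sub>R cross3 (y1 t) (y t))
               (cross3 (y2 t) (y t)) (cross3 (y1 t) (y t))"
    have "matrix_inv ?Y = transpose (?Z ** Qmat)"
      using alg1[where a="y2 t" and b="y1 t" and c="y t" and l="\<alpha> t"] alg2[where a="y2 t" and b="y1 t" and c="y t" and l="\<alpha> t"] d1
      by (intro matrix_inv_eq) simp_all
    then have "transpose (matrix_inv ?Y) ** Qmat = ?Z"
      by (metis transpose_transpose matrix_mul_assoc QQ matrix_mul_rid)
    moreover have "det ?Z = 1" using alg3(2)[where a="y2 t" and b="y1 t" and c="y t" and l="\<alpha> t"] d1 by simp
    ultimately show ?thesis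
      unfolding Let_def vz vz1 z2_def z1_def z_def y1_def[symmetric] y2_def[symmetric] by simp
  qed
  have zdet: "det (cols3 (vderiv (vderiv z) t) (vderiv z t) (z t)) = 1" for t
    using alg3(1)[where a="y2 t" and b="y1 t" and c="y t" and l="\<alpha> t"] ydet[rule_format, of t]
    unfolding vz vz1 z2_def z1_def z_def y1_def y2_def by simp
  show ?thesis
    by (rule exI[of _ z]) (use zdiff zode geo zdet mat in blast)
qed

end
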